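(* Let $\lambda\in\{1,2\}$ and let $u,t,v,w$ be integers such that: $(u,t)$ satisfies $S_{\lambda,1}$ and $u\cdot(vw)=t^3+t^{\lambda}+1$ (so $u,t,vw$ are consecutive terms of $\langle u,t\rangle_{S_{\lambda,1}}=\langle t,vw\rangle_{S_{2,\lambda}}$); $(v,t)$ satisfies $S_{\lambda,1}$ (so $v,t,uw$ are consecutive terms of $\langle v,t\rangle_{S_{\lambda,1}}=\langle t,uw\rangle_{S_{2,\lambda}}$); $|t|$ is a prime; and $t\nmid (u-v)$. Then $(-w,t)$ satisfies $S_{\lambda,1}$, so $-w,t,-uv$ are, in that order, three consecutive terms of a third 4-chain $\langle -w,t\rangle_{S_{\lambda,1}}=\langle t,-uv\rangle_{S_{2,\lambda}}$.
   Context: For $\lambda_a,\lambda_b\in\{1,2\}$, a pair of integers $(x,y)$ satisfies the system $S_{\lambda_a,\lambda_b}$ if $x\mid y^3+y^{\lambda_a}+1$ and $y\mid x^3+x^{\lambda_b}+1$. For such a pair, $\langle x,y\rangle_{S_{\lambda_a,\lambda_b}}$ denotes the bi-infinite integer sequence $(u_n)$ with $u_0=x$, $u_1=y$ and $u_{n-1}u_{n+1}=u_n^3+u_n^{e_n}+1$ for all $n$, where $e_n$ has period 4 with $(e_0,e_1,e_2,e_3)=(\lambda_b,\lambda_a,3-\lambda_b,3-\lambda_a)$; sequences are identified up to shift and reversal of indices. "$u,t,s$, in that order, are three consecutive terms of $\langle u,t\rangle_{S_{\lambda_a,\lambda_b}}$" means $(u,t)$ satisfies $S_{\lambda_a,\lambda_b}$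 and $us=t^3+t^{\lambda_a}+1$. *)

theory Defs
  imports "HOL-Computational_Algebra.Primes"
begin

definition satisfies_S :: "nat \<Rightarrow> nat \<Rightarrow> int \<Rightarrow> int \<Rightarrow> bool" where
  "satisfies_S la lb x y \<longleftrightarrow> x dvd y ^ 3 + y ^ la + 1 \<and> y dvd x ^ 3 + x ^ lb + 1"

text \<open>u, t, s are, in that order, three consecutive terms of the sequence generated by (u,t)
  for S_{la,lb}: (u,t) satisfies S_{la,lb} and u*s = t^3 + t^la + 1.\<close>
definition consec3 :: "nat \<Rightarrow> nat \<Rightarrow> int \<Rightarrow> int \<Rightarrow> int \<Rightarrow> bool" where
  "consec3 la lb u t s \<longleftrightarrow> satisfies_S la lb u t \<and> u * s = t ^ 3 + t ^ la + 1"

end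

theory Submission
  imports Defs
begin

theorem theorem12:
  fixes lam :: nat and u t v w :: int
  assumes "lam \<in> {1, 2}"
    and "satisfies_S lam 1 u t"
    and "u * (v * w) = t ^ 3 + t ^ lam + 1"
    and "satisfies_S lam 1 v t"
    and "prime \<bar>t\<bar>"
    and "\<not> t dvd (u - v)"
  shows "satisfies_S lam 1 (- w) t \<and> consec3 lam 1 (- w) t (- (u * v))"
proof -
  define p where "p = \<bar>t\<bar>"
  have pt: "prime p" using assms(5) p_def by simp
  have A: "p dvd u^3+u+1" using assms(2) p_def by (simp add: satisfies_S_def)
  have B: "p dvd v^3+v+1" using assms(4) p_def by (simp add: satisfies_S_def)
  have C: "p dvd u*v*w - 1"
  proof -
    have "u*v*w - 1 = t^3 + t^lam" using assms(3) by (simp add: algebra_simps)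
    moreover have "t dvd t^lam" using assms(1) by auto
    ultimately have "t dvd u*v*w - 1" by simp
    thus ?thesis using p_def by simp
  qed
  define s where "s = u + v"
  define q where "q = u * v"
  have "(u-v)*(u^2+u*v+v^2+1) = (u^3+u+1) - (v^3+v+1)" by (simp add: algebra_simps power2_eq_square power3_eq_cube)
  hence "p dvd (u-v)*(u^2+u*v+v^2+1)" using A B by (metis dvd_diff)
  hence E0: "p dvd u^2+u*v+v^2+1" proof -
    from \<open>p dvd (u-v)*(u^2+u*v+v^2+1)\<close> pt have "p dvd u-v \<or> p dvd u^2+u*v+v^2+1" by (simp add: prime_dvd_mult_iff)
    moreover have "\<not> p dvd u-v" using assms(6) p_def by simp
    ultimately show ?thesis by blast
  qed
  have E: "p dvd s^2 - q + 1" using E0 unfolding s_def q_def by (simp add: algebra_simps power2_eq_square)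
  have eq2: "2*(s^3+s-1) = 3*s*(s^2-q+1) - ((u^3+u+1) + (v^3+v+1))"
    unfolding s_def q_def by (simp add: algebra_simps power2_eq_square power3_eq_cube)
  have "p dvd 3*s*(s^2-q+1) - ((u^3+u+1) + (v^3+v+1))"
    by (rule dvd_diff[OF dvd_mult[OF E] dvd_add[OF A B]])
  hence D2: "p dvd 2*(s^3+s-1)" unfolding eq2 .
  have "\<not> p dvd 2"
  proof
    assume "p dvd 2"
    moreover have "p \<ge> 0" using p_def by simp
    ultimately have "p \<le> 2" using zdvd_imp_le by simp
    moreover have "p \<ge> 2" using pt prime_ge_2_int by blast
    ultimately have "p = 2" by simp
    hence "2 dvd u^3+u+1" using A by simp
    moreover have "even (u^3+u)" by (cases "even u") auto
    ultimately show False by simp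
  qed
  hence G: "p dvd s^3+s-1" using D2 pt prime_dvd_mult_iff by blast
  have eq3: "q*s - 1 = (s^3+s-1) - s*(s^2-q+1)" by (simp add: algebra_simps power2_eq_square power3_eq_cube)
  have "p dvd (s^3+s-1) - s*(s^2-q+1)" by (rule dvd_diff[OF G dvd_mult[OF E]])
  hence H: "p dvd q*s - 1" unfolding eq3 .
  have C': "p dvd q*w - 1" using C unfolding q_def by simp
  have eq4: "q*(w-s) = (q*w-1) - (q*s-1)" by (simp add: algebra_simps)
  have "p dvd (q*w-1) - (q*s-1)" by (rule dvd_diff[OF C' H])
  hence D3: "p dvd q*(w-s)" unfolding eq4 .
  have "\<not> p dvd q"
  proof
    assume "p dvd q" hence "p dvd q*w" by simp
    hence "p dvd q*w - (q*w-1)" using C' by (simp only: dvd_diff)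
    hence "p dvd 1" by simp
    thus False using pt by (simp add: prime_int_iff)
  qed
  hence I: "p dvd w - s" using D3 pt prime_dvd_mult_iff by blast
  have eq5: "(-w)^3 + (-w)^1 + 1 = (s-w)*(w^2+w*s+s^2+1) - (s^3+s-1)"
    by (simp add: algebra_simps power2_eq_square power3_eq_cube)
  have I': "p dvd s - w" using I by (metis dvd_minus_iff minus_diff_eq)
  have "p dvd (s-w)*(w^2+w*s+s^2+1) - (s^3+s-1)" by (rule dvd_diff[OF dvd_mult2[OF I'] G])
  hence K: "p dvd (-w)^3 + (-w)^1 + 1" unfolding eq5 .
  have L: "(-w) * (-(u*v)) = t^3 + t^lam + 1" using assms(3) by (simp add: algebra_simps)
  hence "(-w) dvd t^3 + t^lam + 1" by (metis dvd_triv_left)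
  hence S: "satisfies_S lam 1 (- w) t" using K p_def by (simp add: satisfies_S_def)
  thus ?thesis using L by (simp add: consec3_def)
qed

end
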